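(* Let $A$ be a monoid and let $\mathfrak{c}=(c_1,c_2,\dots)$ be an infinite sequence of integers with $c_i\ge2$ for all $i$. Then (1) the natural map $A^{\mathfrak{c}}\to(A_{\mathrm{red}})^{\mathfrak{c}}$ is an isomorphism; (2) if $A$ is pc, then the natural map $A^{\mathfrak{c}}\to(A_{\mathrm{sn}})^{\mathfrak{c}}$ is an isomorphism.
   Context: A monoid is a pointed commutative monoid. $A_{\mathrm{red}}$ is $A$ modulo the congruence $a\sim b$ iff $a^n=b^n$ for all $n\gg0$. pc: isomorphic to $C/I$ with $C$ cancellative ($ac=bc,c\ne0\Rightarrow a=b$) and $I$ an ideal. Seminormal: reduced ($a^2=b^2,a^3=b^3\Rightarrow a=b$) and $x^3=y^2\Rightarrow x=z^2,y=z^3$ for some $z$. For pc $A$, $A_{\mathrm{sn}}$ is its seminormalization: the map to a seminormal monoid with $A_{\mathrm{red}}\to A_{\mathrm{sn}}$ injective and every $b\in A_{\mathrm{sn}}$ satisfying $b^n\in A_{\mathrm{red}}$ for all $n\gg0$. For $c\ge2$, $\theta_c:A\to A$, $a\mapsto a^c$, is the dilation, and $A^{\mathfrak{c}}=\mathrm{colim}\{A\xrightarrow{\theta_{c_1}}A\xrightarrow{\theta_{c_2}}\cdots\}$, similarly for $A_{\mathrm{red}}$ and $A_{\mathrm{sn}}$. *)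

theory Defs
  imports "HOL-Algebra.Group"
begin

record 'a pmonoid = "'a monoid" + pzero :: 'a

definition pcmon :: "'a pmonoid \<Rightarrow> bool" where
  "pcmon M \<longleftrightarrow> comm_monoid M \<and> pzero M \<in> carrier M \<and>
     (\<forall>a\<in>carrier M. pzero M \<otimes>\<^bsub>M\<^esub> a = pzero M)"

definition pmon_hom :: "'a pmonoid \<Rightarrow> 'b pmonoid \<Rightarrow> ('a \<Rightarrow> 'b) \<Rightarrow> bool" where
  "pmon_hom M N f \<longleftrightarrow> f \<in> carrier M \<rightarrow> carrier N \<and>
     (\<forall>a\<in>carrier M. \<forall>b\<in>carrier M. f (a \<otimes>\<^bsub>M\<^esub> b) = f a \<otimes>\<^bsub>N\<^esub> f b) \<and>
     f \<one>\<^bsub>M\<^esub> = \<one>\<^bsub>N\<^esub> \<and> f (pzero M) = pzero N"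

definition pmon_iso :: "'a pmonoid \<Rightarrow> 'b pmonoid \<Rightarrow> ('a \<Rightarrow> 'b) \<Rightarrow> bool" where
  "pmon_iso M N f \<longleftrightarrow> pmon_hom M N f \<and> bij_betw f (carrier M) (carrier N)"

definition red_eq :: "'a pmonoid \<Rightarrow> 'a \<Rightarrow> 'a \<Rightarrow> bool" where
  "red_eq M a b \<longleftrightarrow> (\<exists>N. \<forall>n\<ge>N. a [^]\<^bsub>M\<^esub> (n::nat) = b [^]\<^bsub>M\<^esub> n)"

definition red_class :: "'a pmonoid \<Rightarrow> 'a \<Rightarrow> 'a set" where
  "red_class M a = {b \<in> carrier M. red_eq M a b}"

definition red :: "'a pmonoid \<Rightarrow> 'a set pmonoid" where
  "red M = \<lparr>carrier = red_class M ` carrier M,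
     mult = (\<lambda>X Y. red_class M ((SOME x. x \<in> X) \<otimes>\<^bsub>M\<^esub> (SOME y. y \<in> Y))),
     one = red_class M \<one>\<^bsub>M\<^esub>,
     pzero = red_class M (pzero M)\<rparr>"

definition red_map :: "'a pmonoid \<Rightarrow> 'a \<Rightarrow> 'a set" where
  "red_map M = red_class M"

text \<open>The sequence c = (c_1, c_2, ...) is indexed from 0: c 0 = c_1.  Stage i maps to
  stage i+1 by the dilation a \<mapsto> a^(c i); stage i maps to stage j \<ge> i by a \<mapsto> a^(dil_exp c i j).\<close>

definition dil_exp :: "(nat \<Rightarrow> nat) \<Rightarrow> nat \<Rightarrow> nat \<Rightarrow> nat" where
  "dil_exp c i j = (\<Prod>k\<in>{i..<j}. c k)"

definition colim_rel :: "'a pmonoid \<Rightarrow> (nat \<Rightarrow> nat) \<Rightarrow> nat \<times> 'a \<Rightarrow> nat \<times> 'a \<Rightarrow> bool" where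
  "colim_rel M c p q \<longleftrightarrow> (\<exists>k. fst p \<le> k \<and> fst q \<le> k \<and>
      snd p [^]\<^bsub>M\<^esub> dil_exp c (fst p) k = snd q [^]\<^bsub>M\<^esub> dil_exp c (fst q) k)"

definition colim_class :: "'a pmonoid \<Rightarrow> (nat \<Rightarrow> nat) \<Rightarrow> nat \<times> 'a \<Rightarrow> (nat \<times> 'a) set" where
  "colim_class M c p = {q. snd q \<in> carrier M \<and> colim_rel M c p q}"

definition colim :: "'a pmonoid \<Rightarrow> (nat \<Rightarrow> nat) \<Rightarrow> (nat \<times> 'a) set pmonoid" where
  "colim M c = \<lparr>carrier = {colim_class M c (i, a) | i a. a \<in> carrier M},
     mult = (\<lambda>X Y. let p = (SOME p. p \<in> X); q = (SOME q. q \<in> Y); k = max (fst p) (fst q) in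
               colim_class M c (k, snd p [^]\<^bsub>M\<^esub> dil_exp c (fst p) k
                                    \<otimes>\<^bsub>M\<^esub> snd q [^]\<^bsub>M\<^esub> dil_exp c (fst q) k)),
     one = colim_class M c (0, \<one>\<^bsub>M\<^esub>),
     pzero = colim_class M c (0, pzero M)\<rparr>"

text \<open>The map M^c \<rightarrow> N^c induced by a homomorphism f : M \<rightarrow> N (which commutes with dilations).\<close>
definition colim_map :: "'a pmonoid \<Rightarrow> 'b pmonoid \<Rightarrow> (nat \<Rightarrow> nat) \<Rightarrow> ('a \<Rightarrow> 'b)
    \<Rightarrow> (nat \<times> 'a) set \<Rightarrow> (nat \<times> 'b) set" where
  "colim_map M N c f X = (let p = (SOME p. p \<in> X) in colim_class N c (fst p, f (snd p)))"

definition cancellative :: "'a pmonoid \<Rightarrow> bool" where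
  "cancellative C \<longleftrightarrow> (\<forall>a\<in>carrier C. \<forall>b\<in>carrier C. \<forall>x\<in>carrier C.
      a \<otimes>\<^bsub>C\<^esub> x = b \<otimes>\<^bsub>C\<^esub> x \<and> x \<noteq> pzero C \<longrightarrow> a = b)"

definition pmon_ideal :: "'a set \<Rightarrow> 'a pmonoid \<Rightarrow> bool" where
  "pmon_ideal I C \<longleftrightarrow> I \<subseteq> carrier C \<and> pzero C \<in> I \<and>
      (\<forall>x\<in>I. \<forall>a\<in>carrier C. x \<otimes>\<^bsub>C\<^esub> a \<in> I)"

definition rees :: "'a pmonoid \<Rightarrow> 'a set \<Rightarrow> 'a pmonoid" where
  "rees C I = \<lparr>carrier = (carrier C - I) \<union> {pzero C},
     mult = (\<lambda>x y. if x \<otimes>\<^bsub>C\<^esub> y \<in> I then pzero C else x \<otimes>\<^bsub>C\<^esub> y),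
     one = (if \<one>\<^bsub>C\<^esub> \<in> I then pzero C else \<one>\<^bsub>C\<^esub>),
     pzero = pzero C\<rparr>"

text \<open>A is pc iff such data (C, I, g) exist.\<close>
definition pc_presentation :: "'a pmonoid \<Rightarrow> 'c pmonoid \<Rightarrow> 'c set \<Rightarrow> ('a \<Rightarrow> 'c) \<Rightarrow> bool" where
  "pc_presentation A C I g \<longleftrightarrow> pcmon C \<and> cancellative C \<and> pmon_ideal I C \<and> pmon_iso A (rees C I) g"

definition reduced_pm :: "'a pmonoid \<Rightarrow> bool" where
  "reduced_pm S \<longleftrightarrow> (\<forall>a\<in>carrier S. \<forall>b\<in>carrier S.
      a [^]\<^bsub>S\<^esub> (2::nat) = b [^]\<^bsub>S\<^esub> (2::nat) \<and> a [^]\<^bsub>S\<^esub> (3::nat) = b [^]\<^bsub>S\<^esub> (3::nat) \<longrightarrow> a = b)"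

definition seminormal :: "'a pmonoid \<Rightarrow> bool" where
  "seminormal S \<longleftrightarrow> reduced_pm S \<and> (\<forall>x\<in>carrier S. \<forall>y\<in>carrier S.
      x [^]\<^bsub>S\<^esub> (3::nat) = y [^]\<^bsub>S\<^esub> (2::nat) \<longrightarrow>
      (\<exists>z\<in>carrier S. x = z [^]\<^bsub>S\<^esub> (2::nat) \<and> y = z [^]\<^bsub>S\<^esub> (3::nat)))"

text \<open>f : A \<rightarrow> S is a seminormalization of A: S seminormal, the induced map A_red \<rightarrow> S
  is well defined and injective, and every b in S has b^n in the image for all n \<gg> 0.\<close>
definition is_seminormalization :: "'a pmonoid \<Rightarrow> 's pmonoid \<Rightarrow> ('a \<Rightarrow> 's) \<Rightarrow> bool" where
  "is_seminormalization A S f \<longleftrightarrow> pcmon S \<and> seminormal S \<and> pmon_hom A S f \<and>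
     (\<forall>a\<in>carrier A. \<forall>b\<in>carrier A. f a = f b \<longleftrightarrow> red_eq A a b) \<and>
     (\<forall>b\<in>carrier S. \<exists>N. \<forall>n\<ge>N. b [^]\<^bsub>S\<^esub> (n::nat) \<in> f ` carrier A)"

end

theory Submission imports Defs begin

lemma dil_exp_trans: "i \<le> j \<Longrightarrow> j \<le> k \<Longrightarrow> dil_exp c i j * dil_exp c j k = dil_exp c i k"
  unfolding dil_exp_def by (simp add: prod.atLeastLessThan_concat)

lemma dil_exp_refl[simp]: "dil_exp c i i = 1"
  unfolding dil_exp_def by simp

lemma dil_exp_pow2: assumes "\<forall>i. 2 \<le> c i" shows "2^n \<le> dil_exp c i (i+n)"
proof (induction n)
  case 0 then show ?case by simp
next
  case (Suc n)
  have "dil_exp c i (i + Suc n) = dil_exp c i (i+n) * c (i+n)"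
    unfolding dil_exp_def by (simp add: prod.atLeastLessThan_Suc)
  moreover have "2 \<le> c (i+n)" using assms by auto
  ultimately show ?case using Suc mult_le_mono by (metis mult.commute power_Suc)
qed

lemma dil_exp_ge: assumes "\<forall>i. 2 \<le> c i" "i + n \<le> k" shows "n \<le> dil_exp c i k"
proof -
  have "k = i + (k - i)" using assms by simp
  then have "2^(k-i) \<le> dil_exp c i k" using dil_exp_pow2[OF assms(1), of "k-i" i] by simp
  moreover have "n < 2^(k-i)" using assms(2) less_exp[of "k-i"] by linarith
  ultimately show ?thesis by simp
qed


lemma pow_shift:
  fixes M :: "'a pmonoid"
  assumes "monoid M" "x \<in> carrier M" "i \<le> k" "k \<le> K"
  shows "(x [^]\<^bsub>M\<^esub> dil_exp c i k) [^]\<^bsub>M\<^esub> dil_exp c k K = x [^]\<^bsub>M\<^esub> dil_exp c i K"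
proof -
  interpret monoid M by fact
  show ?thesis using assms by (simp add: nat_pow_pow dil_exp_trans)
qed

lemma rel_up:
  fixes M :: "'a pmonoid"
  assumes "monoid M" "a \<in> carrier M" "b \<in> carrier M" "i \<le> k" "j \<le> k" "k \<le> K"
    "a [^]\<^bsub>M\<^esub> dil_exp c i k = b [^]\<^bsub>M\<^esub> dil_exp c j k"
  shows "a [^]\<^bsub>M\<^esub> dil_exp c i K = b [^]\<^bsub>M\<^esub> dil_exp c j K"
  using pow_shift[OF assms(1,2,4,6), of c] pow_shift[OF assms(1,3,5,6), of c] assms(7) by simp

lemma rel_ev:
  fixes M :: "'a pmonoid"
  assumes "monoid M" "a \<in> carrier M" "b \<in> carrier M" "colim_rel M c (i,a) (j,b)"
  shows "\<exists>k0. \<forall>K\<ge>k0. i \<le> K \<and> j \<le> K \<and> a [^]\<^bsub>M\<^esub> dil_exp c i K = b [^]\<^bsub>M\<^esub> dil_exp c j K"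
proof -
  obtain k where k: "i \<le> k" "j \<le> k" "a [^]\<^bsub>M\<^esub> dil_exp c i k = b [^]\<^bsub>M\<^esub> dil_exp c j k"
    using assms(4) unfolding colim_rel_def by auto
  have "\<forall>K\<ge>k. i \<le> K \<and> j \<le> K \<and> a [^]\<^bsub>M\<^esub> dil_exp c i K = b [^]\<^bsub>M\<^esub> dil_exp c j K"
  proof (intro allI impI conjI)
    fix K assume K: "k \<le> K"
    show "i \<le> K" "j \<le> K" using K k by auto
    show "a [^]\<^bsub>M\<^esub> dil_exp c i K = b [^]\<^bsub>M\<^esub> dil_exp c j K"
      by (rule rel_up[OF assms(1-3) k(1,2) K k(3)])
  qed
  then show ?thesis by blast
qed

lemma ev_rel:
  assumes "\<exists>k0. \<forall>K\<ge>k0. i \<le> K \<and> j \<le> K \<and> a [^]\<^bsub>M\<^esub> dil_exp c i K = b [^]\<^bsub>M\<^esub> dil_exp c j K"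
  shows "colim_rel M c (i,a) (j,b)"
  using assms unfolding colim_rel_def by fastforce

lemma class_eq:
  fixes M :: "'a pmonoid"
  assumes "monoid M" "a \<in> carrier M" "b \<in> carrier M"
  shows "colim_class M c (i,a) = colim_class M c (j,b) \<longleftrightarrow> colim_rel M c (i,a) (j,b)"
proof
  assume "colim_class M c (i,a) = colim_class M c (j,b)"
  moreover have "(j,b) \<in> colim_class M c (j,b)"
    using assms unfolding colim_class_def colim_rel_def by auto
  ultimately have "(j,b) \<in> colim_class M c (i,a)" by simp
  then show "colim_rel M c (i,a) (j,b)" unfolding colim_class_def by simp
next
  assume r: "colim_rel M c (i,a) (j,b)"
  obtain k1 where k1: "\<forall>K\<ge>k1. i \<le> K \<and> j \<le> K \<and> a [^]\<^bsub>M\<^esub> dil_exp c i K = b [^]\<^bsub>M\<^esub> dil_exp c j K"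
    using rel_ev[OF assms r] by blast
  show "colim_class M c (i,a) = colim_class M c (j,b)"
  proof (rule Set.set_eqI)
    fix q :: "nat \<times> 'a"
    obtain l x where q: "q = (l,x)" by (cases q)
    show "q \<in> colim_class M c (i,a) \<longleftrightarrow> q \<in> colim_class M c (j,b)"
    proof (cases "x \<in> carrier M")
      case False then show ?thesis unfolding q colim_class_def by simp
    next
      case True
      have "colim_rel M c (i,a) (l,x) \<longleftrightarrow> colim_rel M c (j,b) (l,x)"
      proof
        assume "colim_rel M c (i,a) (l,x)"
        then obtain k2 where k2: "\<forall>K\<ge>k2. i \<le> K \<and> l \<le> K \<and> a [^]\<^bsub>M\<^esub> dil_exp c i K = x [^]\<^bsub>M\<^esub> dil_exp c l K"
          using rel_ev[OF assms(1,2) True] by blast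
        have "\<forall>K\<ge>max k1 k2. j \<le> K \<and> l \<le> K \<and> b [^]\<^bsub>M\<^esub> dil_exp c j K = x [^]\<^bsub>M\<^esub> dil_exp c l K"
        proof (intro allI impI)
          fix K assume "max k1 k2 \<le> K"
          then have "k1 \<le> K" "k2 \<le> K" by auto
          then show "j \<le> K \<and> l \<le> K \<and> b [^]\<^bsub>M\<^esub> dil_exp c j K = x [^]\<^bsub>M\<^esub> dil_exp c l K"
            using k1[rule_format, of K] k2[rule_format, of K] by simp
        qed
        then show "colim_rel M c (j,b) (l,x)" by (rule ev_rel[OF exI])
      next
        assume "colim_rel M c (j,b) (l,x)"
        then obtain k2 where k2: "\<forall>K\<ge>k2. j \<le> K \<and> l \<le> K \<and> b [^]\<^bsub>M\<^esub> dil_exp c j K = x [^]\<^bsub>M\<^esub> dil_exp c l K"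
          using rel_ev[OF assms(1,3) True] by blast
        have "\<forall>K\<ge>max k1 k2. i \<le> K \<and> l \<le> K \<and> a [^]\<^bsub>M\<^esub> dil_exp c i K = x [^]\<^bsub>M\<^esub> dil_exp c l K"
        proof (intro allI impI)
          fix K assume "max k1 k2 \<le> K"
          then have "k1 \<le> K" "k2 \<le> K" by auto
          then show "i \<le> K \<and> l \<le> K \<and> a [^]\<^bsub>M\<^esub> dil_exp c i K = x [^]\<^bsub>M\<^esub> dil_exp c l K"
            using k1[rule_format, of K] k2[rule_format, of K] by simp
        qed
        then show "colim_rel M c (i,a) (l,x)" by (rule ev_rel[OF exI])
      qed
      then show ?thesis unfolding q colim_class_def using True by simp
    qed
  qed
qed

lemma class_self:
  fixes M :: "'a pmonoid"
  assumes "a \<in> carrier M" shows "(i,a) \<in> colim_class M c (i,a)"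
  using assms unfolding colim_class_def colim_rel_def by auto

lemma class_mem:
  fixes M :: "'a pmonoid"
  assumes "monoid M" "a \<in> carrier M" "p \<in> colim_class M c (i,a)"
  shows "snd p \<in> carrier M \<and> colim_class M c (fst p, snd p) = colim_class M c (i,a)"
proof -
  have s: "snd p \<in> carrier M" "colim_rel M c (i,a) p" using assms(3) unfolding colim_class_def by auto
  obtain l x where p: "p = (l,x)" by (cases p)
  have "colim_rel M c (l, x) (i,a)" using s(2) unfolding colim_rel_def p by auto
  then show ?thesis using class_eq[OF assms(1) _ assms(2), of x c l i] s(1) unfolding p by simp
qed

lemma class_shift:
  fixes M :: "'a pmonoid"
  assumes "monoid M" "a \<in> carrier M" "i \<le> k"
  shows "colim_class M c (i,a) = colim_class M c (k, a [^]\<^bsub>M\<^esub> dil_exp c i k)"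
proof -
  interpret monoid M by fact
  have "a [^]\<^bsub>M\<^esub> dil_exp c i k = (a [^]\<^bsub>M\<^esub> dil_exp c i k) [^]\<^bsub>M\<^esub> dil_exp c k k"
    using assms(2) by simp
  then have "colim_rel M c (i,a) (k, a [^]\<^bsub>M\<^esub> dil_exp c i k)"
    unfolding colim_rel_def using assms(3) by (intro exI[of _ k]) simp
  then show ?thesis using class_eq[OF assms(1,2), of "a [^]\<^bsub>M\<^esub> dil_exp c i k"] assms by simp
qed


lemma colim_carrier:
  fixes M :: "'a pmonoid"
  shows "X \<in> carrier (colim M c) \<longleftrightarrow> (\<exists>i a. X = colim_class M c (i,a) \<and> a \<in> carrier M)"
  by (auto simp: colim_def)

lemma some_class:
  fixes M :: "'a pmonoid"
  assumes "monoid M" "a \<in> carrier M"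
  obtains l x where "(SOME p. p \<in> colim_class M c (i,a)) = (l,x)" "x \<in> carrier M"
    "colim_rel M c (l,x) (i,a)"
proof -
  have "(SOME p. p \<in> colim_class M c (i,a)) \<in> colim_class M c (i,a)"
    by (rule someI, rule class_self[OF assms(2)])
  moreover obtain l x where p: "(SOME p. p \<in> colim_class M c (i,a)) = (l,x)" by fastforce
  ultimately have "x \<in> carrier M" "colim_class M c (l,x) = colim_class M c (i,a)"
    using class_mem[OF assms] by fastforce+
  then show ?thesis using that p class_eq[OF assms(1) _ assms(2)] by blast
qed

lemma colim_mult:
  fixes M :: "'a pmonoid"
  assumes cm: "comm_monoid M" and a: "a \<in> carrier M" and b: "b \<in> carrier M" and "i \<le> m" "j \<le> m"
  shows "mult (colim M c) (colim_class M c (i,a)) (colim_class M c (j,b))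
       = colim_class M c (m, a [^]\<^bsub>M\<^esub> dil_exp c i m \<otimes>\<^bsub>M\<^esub> b [^]\<^bsub>M\<^esub> dil_exp c j m)"
proof -
  interpret comm_monoid M by fact
  obtain l x where p: "(SOME p. p \<in> colim_class M c (i,a)) = (l,x)" "x \<in> carrier M"
    "colim_rel M c (l,x) (i,a)" using some_class[OF monoid_axioms a] by blast
  obtain l' y where q: "(SOME p. p \<in> colim_class M c (j,b)) = (l',y)" "y \<in> carrier M"
    "colim_rel M c (l',y) (j,b)" using some_class[OF monoid_axioms b] by blast
  obtain k1 where k1: "\<forall>K\<ge>k1. l \<le> K \<and> i \<le> K \<and> x [^]\<^bsub>M\<^esub> dil_exp c l K = a [^]\<^bsub>M\<^esub> dil_exp c i K"
    using rel_ev[OF monoid_axioms p(2) a p(3)] by blast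
  obtain k2 where k2: "\<forall>K\<ge>k2. l' \<le> K \<and> j \<le> K \<and> y [^]\<^bsub>M\<^esub> dil_exp c l' K = b [^]\<^bsub>M\<^esub> dil_exp c j K"
    using rel_ev[OF monoid_axioms q(2) b q(3)] by blast
  define k where "k = max l l'"
  have lhs: "mult (colim M c) (colim_class M c (i,a)) (colim_class M c (j,b))
     = colim_class M c (k, x [^]\<^bsub>M\<^esub> dil_exp c l k \<otimes>\<^bsub>M\<^esub> y [^]\<^bsub>M\<^esub> dil_exp c l' k)"
    by (simp add: colim_def Let_def p(1) q(1) k_def)
  have "\<forall>K\<ge>max k1 (max k2 (max k m)). k \<le> K \<and> m \<le> K \<and>
      (x [^]\<^bsub>M\<^esub> dil_exp c l k \<otimes>\<^bsub>M\<^esub> y [^]\<^bsub>M\<^esub> dil_exp c l' k) [^]\<^bsub>M\<^esub> dil_exp c k K =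
      (a [^]\<^bsub>M\<^esub> dil_exp c i m \<otimes>\<^bsub>M\<^esub> b [^]\<^bsub>M\<^esub> dil_exp c j m) [^]\<^bsub>M\<^esub> dil_exp c m K"
  proof (intro allI impI conjI)
    fix K assume K: "max k1 (max k2 (max k m)) \<le> K"
    then have K1: "k1 \<le> K" "k2 \<le> K" "k \<le> K" "m \<le> K" by auto
    show "k \<le> K" "m \<le> K" by fact+
    have "l \<le> k" "l' \<le> k" unfolding k_def by auto
    have "(x [^]\<^bsub>M\<^esub> dil_exp c l k \<otimes>\<^bsub>M\<^esub> y [^]\<^bsub>M\<^esub> dil_exp c l' k) [^]\<^bsub>M\<^esub> dil_exp c k K
        = (x [^]\<^bsub>M\<^esub> dil_exp c l k) [^]\<^bsub>M\<^esub> dil_exp c k K \<otimes>\<^bsub>M\<^esub> (y [^]\<^bsub>M\<^esub> dil_exp c l' k) [^]\<^bsub>M\<^esub> dil_exp c k K"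
      using p(2) q(2) by (simp add: nat_pow_distrib)
    also have "\<dots> = x [^]\<^bsub>M\<^esub> dil_exp c l K \<otimes>\<^bsub>M\<^esub> y [^]\<^bsub>M\<^esub> dil_exp c l' K"
      using pow_shift[OF monoid_axioms p(2) \<open>l \<le> k\<close> K1(3)] pow_shift[OF monoid_axioms q(2) \<open>l' \<le> k\<close> K1(3)]
      by simp
    also have "\<dots> = a [^]\<^bsub>M\<^esub> dil_exp c i K \<otimes>\<^bsub>M\<^esub> b [^]\<^bsub>M\<^esub> dil_exp c j K"
      using k1[rule_format, OF K1(1)] k2[rule_format, OF K1(2)] by simp
    also have "\<dots> = (a [^]\<^bsub>M\<^esub> dil_exp c i m) [^]\<^bsub>M\<^esub> dil_exp c m K \<otimes>\<^bsub>M\<^esub> (b [^]\<^bsub>M\<^esub> dil_exp c j m) [^]\<^bsub>M\<^esub> dil_exp c m K"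
      using pow_shift[OF monoid_axioms a \<open>i \<le> m\<close> K1(4)] pow_shift[OF monoid_axioms b \<open>j \<le> m\<close> K1(4)]
      by simp
    also have "\<dots> = (a [^]\<^bsub>M\<^esub> dil_exp c i m \<otimes>\<^bsub>M\<^esub> b [^]\<^bsub>M\<^esub> dil_exp c j m) [^]\<^bsub>M\<^esub> dil_exp c m K"
      using a b by (simp add: nat_pow_distrib)
    finally show "(x [^]\<^bsub>M\<^esub> dil_exp c l k \<otimes>\<^bsub>M\<^esub> y [^]\<^bsub>M\<^esub> dil_exp c l' k) [^]\<^bsub>M\<^esub> dil_exp c k K =
      (a [^]\<^bsub>M\<^esub> dil_exp c i m \<otimes>\<^bsub>M\<^esub> b [^]\<^bsub>M\<^esub> dil_exp c j m) [^]\<^bsub>M\<^esub> dil_exp c m K" .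
  qed
  then have "colim_rel M c (k, x [^]\<^bsub>M\<^esub> dil_exp c l k \<otimes>\<^bsub>M\<^esub> y [^]\<^bsub>M\<^esub> dil_exp c l' k)
      (m, a [^]\<^bsub>M\<^esub> dil_exp c i m \<otimes>\<^bsub>M\<^esub> b [^]\<^bsub>M\<^esub> dil_exp c j m)" by (rule ev_rel[OF exI])
  then show ?thesis unfolding lhs using class_eq[OF monoid_axioms] p(2) q(2) a b by simp
qed

lemma hom_pow:
  fixes M :: "'a pmonoid" and N :: "'b pmonoid"
  assumes "monoid M" "pmon_hom M N f" "x \<in> carrier M"
  shows "f (x [^]\<^bsub>M\<^esub> (n::nat)) = f x [^]\<^bsub>N\<^esub> n"
proof (induction n)
  case 0 then show ?case using assms(2) by (simp add: pmon_hom_def)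
next
  case (Suc n)
  interpret monoid M by fact
  show ?case using Suc assms(2,3) by (simp add: pmon_hom_def)
qed

lemma colim_map_class:
  fixes M :: "'a pmonoid" and N :: "'b pmonoid"
  assumes "monoid M" "monoid N" "pmon_hom M N f" "a \<in> carrier M"
  shows "colim_map M N c f (colim_class M c (i,a)) = colim_class N c (i, f a)"
proof -
  obtain l x where p: "(SOME p. p \<in> colim_class M c (i,a)) = (l,x)" "x \<in> carrier M"
    "colim_rel M c (l,x) (i,a)" using some_class[OF assms(1,4)] by blast
  obtain k where k: "l \<le> k" "i \<le> k" "x [^]\<^bsub>M\<^esub> dil_exp c l k = a [^]\<^bsub>M\<^esub> dil_exp c i k"
    using p(3) unfolding colim_rel_def by auto
  have "f x [^]\<^bsub>N\<^esub> dil_exp c l k = f a [^]\<^bsub>N\<^esub> dil_exp c i k"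
    using k(3) hom_pow[OF assms(1,3)] p(2) assms(4) by metis
  then have "colim_rel N c (l, f x) (i, f a)" unfolding colim_rel_def using k by auto
  moreover have "f x \<in> carrier N" "f a \<in> carrier N" using assms(3) p(2) assms(4)
    unfolding pmon_hom_def by auto
  ultimately show ?thesis unfolding colim_map_def Let_def p using class_eq[OF assms(2)] by simp
qed


lemma colim_iso:
  fixes M :: "'a pmonoid" and N :: "'b pmonoid"
  assumes CM: "comm_monoid M" and CN: "comm_monoid N" and z: "pzero M \<in> carrier M"
    and hom: "pmon_hom M N f"
    and inj: "\<forall>a\<in>carrier M. \<forall>b\<in>carrier M. f a = f b \<longrightarrow> red_eq M a b"
    and surj: "\<forall>y\<in>carrier N. \<exists>n0. \<forall>n\<ge>n0. y [^]\<^bsub>N\<^esub> (n::nat) \<in> f ` carrier M"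
    and c: "\<forall>i. 2 \<le> c i"
  shows "pmon_iso (colim M c) (colim N c) (colim_map M N c f)"
proof -
  interpret M: comm_monoid M by fact
  interpret N: comm_monoid N by fact
  have mM: "monoid M" and mN: "monoid N" by unfold_locales
  have fc: "\<And>a. a \<in> carrier M \<Longrightarrow> f a \<in> carrier N" using hom unfolding pmon_hom_def by auto
  have fm: "\<And>a b. a \<in> carrier M \<Longrightarrow> b \<in> carrier M \<Longrightarrow> f (a \<otimes>\<^bsub>M\<^esub> b) = f a \<otimes>\<^bsub>N\<^esub> f b"
    using hom unfolding pmon_hom_def by auto
  have mc: "\<And>i a. a \<in> carrier M \<Longrightarrow> colim_map M N c f (colim_class M c (i,a)) = colim_class N c (i, f a)"
    by (rule colim_map_class[OF mM mN hom])
  have hp: "\<And>a n. a \<in> carrier M \<Longrightarrow> f (a [^]\<^bsub>M\<^esub> (n::nat)) = f a [^]\<^bsub>N\<^esub> n"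
    by (rule hom_pow[OF mM hom])
  have Pi: "colim_map M N c f \<in> carrier (colim M c) \<rightarrow> carrier (colim N c)"
    using mc fc by (fastforce simp: colim_carrier)
  have mult: "\<forall>X\<in>carrier (colim M c). \<forall>Y\<in>carrier (colim M c).
     colim_map M N c f (X \<otimes>\<^bsub>colim M c\<^esub> Y) = colim_map M N c f X \<otimes>\<^bsub>colim N c\<^esub> colim_map M N c f Y"
  proof (intro ballI)
    fix X Y assume "X \<in> carrier (colim M c)" "Y \<in> carrier (colim M c)"
    then obtain i a j b where X: "X = colim_class M c (i,a)" "a \<in> carrier M"
      and Y: "Y = colim_class M c (j,b)" "b \<in> carrier M" by (auto simp: colim_carrier)
    define m where "m = max i j"
    have im: "i \<le> m" "j \<le> m" unfolding m_def by auto
    have "colim_map M N c f (X \<otimes>\<^bsub>colim M c\<^esub> Y)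
        = colim_class N c (m, f (a [^]\<^bsub>M\<^esub> dil_exp c i m \<otimes>\<^bsub>M\<^esub> b [^]\<^bsub>M\<^esub> dil_exp c j m))"
      unfolding X Y colim_mult[OF CM X(2) Y(2) im] using X(2) Y(2) by (simp add: mc)
    also have "\<dots> = colim_class N c (m, f a [^]\<^bsub>N\<^esub> dil_exp c i m \<otimes>\<^bsub>N\<^esub> f b [^]\<^bsub>N\<^esub> dil_exp c j m)"
      using X(2) Y(2) by (simp add: fm hp)
    also have "\<dots> = colim_map M N c f X \<otimes>\<^bsub>colim N c\<^esub> colim_map M N c f Y"
      unfolding X Y using X(2) Y(2) by (simp add: mc colim_mult[OF CN fc fc im])
    finally show "colim_map M N c f (X \<otimes>\<^bsub>colim M c\<^esub> Y) = colim_map M N c f X \<otimes>\<^bsub>colim N c\<^esub> colim_map M N c f Y" .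
  qed
  have one: "colim_map M N c f \<one>\<^bsub>colim M c\<^esub> = \<one>\<^bsub>colim N c\<^esub>"
    using mc[OF M.one_closed, of 0] hom by (simp add: colim_def pmon_hom_def)
  have zero: "colim_map M N c f (pzero (colim M c)) = pzero (colim N c)"
    using mc[OF z, of 0] hom by (simp add: colim_def pmon_hom_def)
  have injon: "inj_on (colim_map M N c f) (carrier (colim M c))"
  proof (rule inj_onI)
    fix X Y assume "X \<in> carrier (colim M c)" "Y \<in> carrier (colim M c)"
      and eq: "colim_map M N c f X = colim_map M N c f Y"
    then obtain i a j b where X: "X = colim_class M c (i,a)" "a \<in> carrier M"
      and Y: "Y = colim_class M c (j,b)" "b \<in> carrier M" by (auto simp: colim_carrier)
    have "colim_class N c (i, f a) = colim_class N c (j, f b)" using eq X Y mc by simp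
    then have "colim_rel N c (i, f a) (j, f b)" using class_eq[OF mN fc fc] X(2) Y(2) by blast
    then obtain k where k: "i \<le> k" "j \<le> k" "f a [^]\<^bsub>N\<^esub> dil_exp c i k = f b [^]\<^bsub>N\<^esub> dil_exp c j k"
      unfolding colim_rel_def by auto
    then have "f (a [^]\<^bsub>M\<^esub> dil_exp c i k) = f (b [^]\<^bsub>M\<^esub> dil_exp c j k)"
      using X(2) Y(2) hp by simp
    then have "red_eq M (a [^]\<^bsub>M\<^esub> dil_exp c i k) (b [^]\<^bsub>M\<^esub> dil_exp c j k)"
      using inj X(2) Y(2) by simp
    then obtain n0 where n0: "\<forall>n\<ge>n0. (a [^]\<^bsub>M\<^esub> dil_exp c i k) [^]\<^bsub>M\<^esub> n = (b [^]\<^bsub>M\<^esub> dil_exp c j k) [^]\<^bsub>M\<^esub> (n::nat)"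
      unfolding red_eq_def by blast
    define K where "K = k + n0"
    have "n0 \<le> dil_exp c k K" unfolding K_def by (rule dil_exp_ge[OF c]) simp
    then have "(a [^]\<^bsub>M\<^esub> dil_exp c i k) [^]\<^bsub>M\<^esub> dil_exp c k K = (b [^]\<^bsub>M\<^esub> dil_exp c j k) [^]\<^bsub>M\<^esub> dil_exp c k K"
      using n0 by blast
    then have "a [^]\<^bsub>M\<^esub> dil_exp c i K = b [^]\<^bsub>M\<^esub> dil_exp c j K"
      using pow_shift[OF mM X(2) k(1), of K] pow_shift[OF mM Y(2) k(2), of K] unfolding K_def by simp
    then have "colim_rel M c (i,a) (j,b)" unfolding colim_rel_def K_def using k by (intro exI[of _ "k+n0"]) simp
    then show "X = Y" using X Y class_eq[OF mM X(2) Y(2)] by simp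
  qed
  have img: "colim_map M N c f ` carrier (colim M c) = carrier (colim N c)"
  proof
    show "colim_map M N c f ` carrier (colim M c) \<subseteq> carrier (colim N c)" using Pi by auto
  next
    show "carrier (colim N c) \<subseteq> colim_map M N c f ` carrier (colim M c)"
    proof
      fix Y assume "Y \<in> carrier (colim N c)"
      then obtain i y where Y: "Y = colim_class N c (i,y)" "y \<in> carrier N" by (auto simp: colim_carrier)
      obtain n0 where n0: "\<forall>n\<ge>n0. y [^]\<^bsub>N\<^esub> (n::nat) \<in> f ` carrier M" using surj Y(2) by blast
      define K where "K = i + n0"
      have "n0 \<le> dil_exp c i K" unfolding K_def by (rule dil_exp_ge[OF c]) simp
      then obtain a where a: "a \<in> carrier M" "y [^]\<^bsub>N\<^esub> dil_exp c i K = f a" using n0 by blast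
      have "Y = colim_class N c (K, f a)"
        unfolding Y(1) a(2)[symmetric] by (rule class_shift[OF mN Y(2)]) (simp add: K_def)
      also have "\<dots> = colim_map M N c f (colim_class M c (K,a))" using mc a(1) by simp
      finally have "Y = colim_map M N c f (colim_class M c (K,a))" .
      then show "Y \<in> colim_map M N c f ` carrier (colim M c)"
        apply (simp only:)
      proof (rule imageI)
        show "colim_class M c (K,a) \<in> carrier (colim M c)" using a(1) by (auto simp: colim_carrier)
      qed
    qed
  qed
  show ?thesis unfolding pmon_iso_def pmon_hom_def bij_betw_def
    using Pi mult one zero injon img by blast
qed


lemma red_eq_refl: "red_eq M a a" unfolding red_eq_def by auto
lemma red_eq_sym: assumes "red_eq M a b" shows "red_eq M b a"
proof -
  obtain N1 where 1: "\<forall>n\<ge>N1. a [^]\<^bsub>M\<^esub> (n::nat) = b [^]\<^bsub>M\<^esub> n" using assms(1) unfolding red_eq_def by blast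
  show ?thesis unfolding red_eq_def by (rule exI[of _ N1]) (use 1 in simp)
qed
lemma red_eq_trans: assumes "red_eq M a b" "red_eq M b d" shows "red_eq M a d"
proof -
  obtain N1 where 1: "\<forall>n\<ge>N1. a [^]\<^bsub>M\<^esub> (n::nat) = b [^]\<^bsub>M\<^esub> n" using assms(1) unfolding red_eq_def by blast
  obtain N2 where 2: "\<forall>n\<ge>N2. b [^]\<^bsub>M\<^esub> (n::nat) = d [^]\<^bsub>M\<^esub> n" using assms(2) unfolding red_eq_def by blast
  show ?thesis unfolding red_eq_def by (rule exI[of _ "max N1 N2"]) (use 1 2 in auto)
qed

lemma rc_eq:
  assumes "a \<in> carrier M" "b \<in> carrier M"
  shows "red_class M a = red_class M b \<longleftrightarrow> red_eq M a b"
proof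
  assume "red_class M a = red_class M b"
  moreover have "b \<in> red_class M b" using assms red_eq_refl unfolding red_class_def by auto
  ultimately show "red_eq M a b" unfolding red_class_def by auto
next
  assume "red_eq M a b"
  then have "\<And>x. red_eq M a x \<longleftrightarrow> red_eq M b x"
    using red_eq_sym red_eq_trans by meson
  then show "red_class M a = red_class M b" unfolding red_class_def by simp
qed

lemma rc_some:
  assumes "a \<in> carrier M"
  shows "(SOME x. x \<in> red_class M a) \<in> carrier M \<and> red_eq M a (SOME x. x \<in> red_class M a)"
proof -
  have "(SOME x. x \<in> red_class M a) \<in> red_class M a"
    by (rule someI[of _ a]) (use assms red_eq_refl in \<open>auto simp: red_class_def\<close>)
  then show ?thesis unfolding red_class_def by auto
qed

lemma red_mult:
  fixes M :: "'a pmonoid"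
  assumes cm: "comm_monoid M" and a: "a \<in> carrier M" and b: "b \<in> carrier M"
  shows "red_class M a \<otimes>\<^bsub>red M\<^esub> red_class M b = red_class M (a \<otimes>\<^bsub>M\<^esub> b)"
proof -
  interpret comm_monoid M by fact
  define x where "x = (SOME x. x \<in> red_class M a)"
  define y where "y = (SOME x. x \<in> red_class M b)"
  have x: "x \<in> carrier M" "red_eq M a x" using rc_some[OF a] unfolding x_def by auto
  have y: "y \<in> carrier M" "red_eq M b y" using rc_some[OF b] unfolding y_def by auto
  obtain N1 where 1: "\<forall>n\<ge>N1. a [^]\<^bsub>M\<^esub> (n::nat) = x [^]\<^bsub>M\<^esub> n" using x(2) unfolding red_eq_def by blast
  obtain N2 where 2: "\<forall>n\<ge>N2. b [^]\<^bsub>M\<^esub> (n::nat) = y [^]\<^bsub>M\<^esub> n" using y(2) unfolding red_eq_def by blast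
  have "red_eq M (x \<otimes>\<^bsub>M\<^esub> y) (a \<otimes>\<^bsub>M\<^esub> b)" unfolding red_eq_def
    by (rule exI[of _ "max N1 N2"]) (use 1 2 a b x y in \<open>auto simp: nat_pow_distrib\<close>)
  then have "red_class M (x \<otimes>\<^bsub>M\<^esub> y) = red_class M (a \<otimes>\<^bsub>M\<^esub> b)"
    using rc_eq x y a b by (metis m_closed)
  then show ?thesis unfolding red_def x_def y_def by simp
qed

lemma red_carrier: "carrier (red M) = red_class M ` carrier M" by (simp add: red_def)

lemma red_cm:
  fixes M :: "'a pmonoid"
  assumes cm: "comm_monoid M"
  shows "comm_monoid (red M)"
proof -
  interpret comm_monoid M by fact
  show ?thesis
  proof (rule comm_monoidI)
    fix X Y assume "X \<in> carrier (red M)" "Y \<in> carrier (red M)"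
    then obtain a b where "X = red_class M a" "a \<in> carrier M" "Y = red_class M b" "b \<in> carrier M"
      by (auto simp: red_carrier)
    then show "X \<otimes>\<^bsub>red M\<^esub> Y \<in> carrier (red M)" by (simp add: red_mult[OF cm] red_carrier)
  next
    show "\<one>\<^bsub>red M\<^esub> \<in> carrier (red M)" by (simp add: red_def)
  next
    fix X Y Z assume "X \<in> carrier (red M)" "Y \<in> carrier (red M)" "Z \<in> carrier (red M)"
    then obtain a b d where "X = red_class M a" "a \<in> carrier M" "Y = red_class M b" "b \<in> carrier M"
       "Z = red_class M d" "d \<in> carrier M"
      by (auto simp: red_carrier)
    then show "X \<otimes>\<^bsub>red M\<^esub> Y \<otimes>\<^bsub>red M\<^esub> Z = X \<otimes>\<^bsub>red M\<^esub> (Y \<otimes>\<^bsub>red M\<^esub> Z)"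
      by (simp add: red_mult[OF cm] m_assoc)
  next
    fix X assume "X \<in> carrier (red M)"
    then obtain a where "X = red_class M a" "a \<in> carrier M" by (auto simp: red_carrier)
    moreover have "\<one>\<^bsub>red M\<^esub> = red_class M \<one>\<^bsub>M\<^esub>" by (simp add: red_def)
    ultimately show "\<one>\<^bsub>red M\<^esub> \<otimes>\<^bsub>red M\<^esub> X = X" by (simp add: red_mult[OF cm])
  next
    fix X Y assume "X \<in> carrier (red M)" "Y \<in> carrier (red M)"
    then obtain a b where "X = red_class M a" "a \<in> carrier M" "Y = red_class M b" "b \<in> carrier M"
      by (auto simp: red_carrier)
    then show "X \<otimes>\<^bsub>red M\<^esub> Y = Y \<otimes>\<^bsub>red M\<^esub> X" by (simp add: red_mult[OF cm] m_comm)
  qed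
qed

lemma red_pow:
  fixes M :: "'a pmonoid"
  assumes cm: "comm_monoid M" and a: "a \<in> carrier M"
  shows "red_class M a [^]\<^bsub>red M\<^esub> (n::nat) = red_class M (a [^]\<^bsub>M\<^esub> n)"
proof (induction n)
  case 0 then show ?case by (simp add: red_def)
next
  case (Suc n)
  interpret comm_monoid M by fact
  show ?case using Suc a by (simp add: red_mult[OF cm])
qed

lemma part1:
  fixes A :: "'a pmonoid"
  assumes "pcmon A" "\<forall>i. 2 \<le> c i"
  shows "pmon_iso (colim A c) (colim (red A) c) (colim_map A (red A) c (red_map A))"
proof -
  have cm: "comm_monoid A" and z: "pzero A \<in> carrier A" using assms(1) unfolding pcmon_def by auto
  interpret comm_monoid A by fact
  have hom: "pmon_hom A (red A) (red_map A)"
    unfolding pmon_hom_def red_map_def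
  proof (intro conjI ballI)
    show "red_class A \<in> carrier A \<rightarrow> carrier (red A)" by (simp add: red_carrier)
    fix a b assume "a \<in> carrier A" "b \<in> carrier A"
    then show "red_class A (a \<otimes>\<^bsub>A\<^esub> b) = red_class A a \<otimes>\<^bsub>red A\<^esub> red_class A b"
      using red_mult[OF cm] by simp
  qed (simp_all add: red_def)
  show ?thesis
  proof (rule colim_iso[OF cm red_cm[OF cm] z hom _ _ assms(2)])
    show "\<forall>a\<in>carrier A. \<forall>b\<in>carrier A. red_map A a = red_map A b \<longrightarrow> red_eq A a b"
      unfolding red_map_def by (simp add: rc_eq)
    show "\<forall>y\<in>carrier (red A). \<exists>n0. \<forall>n\<ge>n0. y [^]\<^bsub>red A\<^esub> (n::nat) \<in> red_map A ` carrier A"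
    proof
      fix y assume "y \<in> carrier (red A)"
      then obtain a where a: "y = red_class A a" "a \<in> carrier A" by (auto simp: red_carrier)
      have "\<forall>n\<ge>0. y [^]\<^bsub>red A\<^esub> (n::nat) \<in> red_map A ` carrier A"
      proof (intro allI impI)
        fix n :: nat
        have "y [^]\<^bsub>red A\<^esub> n = red_map A (a [^]\<^bsub>A\<^esub> n)"
          unfolding a(1) red_map_def by (rule red_pow[OF cm a(2)])
        then show "y [^]\<^bsub>red A\<^esub> n \<in> red_map A ` carrier A" using a(2) by simp
      qed
      then show "\<exists>n0. \<forall>n\<ge>n0. y [^]\<^bsub>red A\<^esub> (n::nat) \<in> red_map A ` carrier A" by blast
    qed
  qed
qed

theorem lemma3p5:
  fixes A :: "'a pmonoid" and c :: "nat \<Rightarrow> nat"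
  assumes "pcmon A" and "\<forall>i. 2 \<le> c i"
  shows "pmon_iso (colim A c) (colim (red A) c) (colim_map A (red A) c (red_map A)) \<and>
    (\<forall>C I g S f. pc_presentation A (C :: 'c pmonoid) I g \<and>
        is_seminormalization A (S :: 's pmonoid) f \<longrightarrow>
        pmon_iso (colim A c) (colim S c) (colim_map A S c f))"
proof (intro conjI allI impI)
  show "pmon_iso (colim A c) (colim (red A) c) (colim_map A (red A) c (red_map A))"
    by (rule part1[OF assms])
next
  fix C :: "'c pmonoid" and I g and S :: "'s pmonoid" and f
  assume h: "pc_presentation A C I g \<and> is_seminormalization A S f"
  have cm: "comm_monoid A" and z: "pzero A \<in> carrier A" using assms(1) unfolding pcmon_def by auto
  have s: "pcmon S" "pmon_hom A S f" "\<forall>a\<in>carrier A. \<forall>b\<in>carrier A. f a = f b \<longleftrightarrow> red_eq A a b"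
    "\<forall>b\<in>carrier S. \<exists>N. \<forall>n\<ge>N. b [^]\<^bsub>S\<^esub> (n::nat) \<in> f ` carrier A"
    using h unfolding is_seminormalization_def by auto
  have cs: "comm_monoid S" using s(1) unfolding pcmon_def by auto
  show "pmon_iso (colim A c) (colim S c) (colim_map A S c f)"
  proof (rule colim_iso[OF cm cs z s(2) _ s(4) assms(2)], intro ballI impI)
    fix a b assume ab: "a \<in> carrier A" "b \<in> carrier A" "f a = f b"
    have "f a = f b \<longleftrightarrow> red_eq A a b" using s(3) ab(1,2) by simp
    then show "red_eq A a b" using ab(3) by simp
  qed
qed

end
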